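(* Let $3\le a<b$ be integers and regard $T(z,\alpha)=\frac{-\ln(1-z)}{\alpha a z^{a-1}+(1-\alpha)bz^{b-1}}$ as a function of $(z,\alpha)\in(0,1)\times\mathbb{R}$ (where the denominator is nonzero). Then $T$ has exactly one critical point, namely $$(\tilde z,\tilde\alpha)=\Big((a/b)^{1/(b-a)},\ \frac{b-1}{b-a}-\frac{1}{f(\tilde z)(b-a)}\Big),$$ and this point is a saddle point (the Hessian of $T$ there has negative determinant).
   Context: $f(z)=\frac{-\ln(1-z)(1-z)}{z}$ for $z\in(0,1)$. *)

theory Defs
  imports "HOL-Analysis.Analysis"
begin

definition f :: "real \<Rightarrow> real" where
  "f z = (- ln (1 - z) * (1 - z)) / z"

definition Tden :: "nat \<Rightarrow> nat \<Rightarrow> real \<Rightarrow> real \<Rightarrow> real" where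
  "Tden a b z \<alpha> = \<alpha> * real a * z ^ (a - 1) + (1 - \<alpha>) * real b * z ^ (b - 1)"

definition T :: "nat \<Rightarrow> nat \<Rightarrow> real \<Rightarrow> real \<Rightarrow> real" where
  "T a b z \<alpha> = - ln (1 - z) / Tden a b z \<alpha>"

definition Tdom :: "nat \<Rightarrow> nat \<Rightarrow> (real \<times> real) set" where
  "Tdom a b = {(z, \<alpha>). 0 < z \<and> z < 1 \<and> Tden a b z \<alpha> \<noteq> 0}"

definition critical_point :: "nat \<Rightarrow> nat \<Rightarrow> real \<times> real \<Rightarrow> bool" where
  "critical_point a b p \<longleftrightarrow> p \<in> Tdom a b \<and>
     ((\<lambda>(z, \<alpha>). T a b z \<alpha>) has_derivative (\<lambda>_. 0)) (at p)"

definition Tz :: "nat \<Rightarrow> nat \<Rightarrow> real \<Rightarrow> real \<Rightarrow> real" where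
  "Tz a b z \<alpha> = deriv (\<lambda>w. T a b w \<alpha>) z"

definition Ta :: "nat \<Rightarrow> nat \<Rightarrow> real \<Rightarrow> real \<Rightarrow> real" where
  "Ta a b z \<alpha> = deriv (\<lambda>w. T a b z w) \<alpha>"

definition hessian_det :: "nat \<Rightarrow> nat \<Rightarrow> real \<Rightarrow> real \<Rightarrow> real" where
  "hessian_det a b z \<alpha> =
     deriv (\<lambda>w. Tz a b w \<alpha>) z * deriv (\<lambda>w. Ta a b z w) \<alpha>
     - deriv (\<lambda>w. Tz a b z w) \<alpha> * deriv (\<lambda>w. Ta a b w \<alpha>) z"

end

theory Submission
  imports Defs
begin

definition Dz :: "nat \<Rightarrow> nat \<Rightarrow> real \<Rightarrow> real \<Rightarrow> real" where
  "Dz a b z \<alpha> = \<alpha> * real a * (real (a - 1) * z ^ (a - 2)) + (1 - \<alpha>) * real b * (real (b - 1) * z ^ (b - 2))"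

definition Tzf :: "nat \<Rightarrow> nat \<Rightarrow> real \<Rightarrow> real \<Rightarrow> real" where
  "Tzf a b z \<alpha> = ((1 / (1 - z)) * Tden a b z \<alpha> - (- ln (1 - z)) * Dz a b z \<alpha>) / (Tden a b z \<alpha>)^2"

definition Taf :: "nat \<Rightarrow> nat \<Rightarrow> real \<Rightarrow> real \<Rightarrow> real" where
  "Taf a b z \<alpha> = - (- ln (1 - z)) * (real a * z ^ (a - 1) - real b * z ^ (b - 1)) / (Tden a b z \<alpha>)^2"

lemma Tden_has: "((\<lambda>w. Tden a b w \<alpha>) has_real_derivative Dz a b z \<alpha>) (at z)"
  unfolding Tden_def Dz_def
  by (rule derivative_eq_intros refl | simp add: numeral_2_eq_2)+

lemma T_z_has:
  assumes "z < 1" "Tden a b z \<alpha> \<noteq> 0"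
  shows "((\<lambda>w. T a b w \<alpha>) has_real_derivative Tzf a b z \<alpha>) (at z)"
proof -
  have l: "((\<lambda>w. - ln (1 - w)) has_real_derivative 1 / (1 - z)) (at z)"
    using assms by (auto intro!: derivative_eq_intros)
  show ?thesis unfolding T_def[abs_def] Tzf_def
    using DERIV_divide[OF l Tden_has assms(2)] by (simp add: power2_eq_square)
qed

lemma T_a_has:
  assumes "Tden a b z \<alpha> \<noteq> 0"
  shows "((\<lambda>u. T a b z u) has_real_derivative Taf a b z \<alpha>) (at \<alpha>)"
proof -
  have d: "((\<lambda>u. Tden a b z u) has_real_derivative (real a * z ^ (a - 1) - real b * z ^ (b - 1))) (at \<alpha>)"
    unfolding Tden_def by (auto intro!: derivative_eq_intros simp: algebra_simps)
  show ?thesis unfolding T_def[abs_def] Taf_def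
    using DERIV_divide[OF DERIV_const[of "- ln (1 - z)"] d assms] by (simp add: power2_eq_square)
qed

lemma T_total:
  assumes "z < 1" "Tden a b z \<alpha> \<noteq> 0"
  shows "((\<lambda>(z, \<alpha>). T a b z \<alpha>) has_derivative (\<lambda>(h, k). h * Tzf a b z \<alpha> + k * Taf a b z \<alpha>)) (at (z, \<alpha>))"
proof -
  have N: "((\<lambda>p. - ln (1 - fst p)) has_derivative (\<lambda>h. fst h * (1 / (1 - z)))) (at (z, \<alpha>))"
    using assms(1) by (auto intro!: derivative_eq_intros simp: fun_eq_iff field_simps)
  have D: "((\<lambda>p. Tden a b (fst p) (snd p)) has_derivative
      (\<lambda>h. fst h * Dz a b z \<alpha> + snd h * (real a * z ^ (a - 1) - real b * z ^ (b - 1)))) (at (z, \<alpha>))"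
    unfolding Tden_def Dz_def
    by (auto intro!: derivative_eq_intros simp: fun_eq_iff algebra_simps numeral_2_eq_2)
  have "((\<lambda>p. T a b (fst p) (snd p)) has_derivative (\<lambda>(h, k). h * Tzf a b z \<alpha> + k * Taf a b z \<alpha>)) (at (z, \<alpha>))"
    unfolding T_def
    apply (rule has_derivative_eq_rhs)
     apply (rule has_derivative_divide'[OF N D])
    using assms(2) apply simp
    using assms(2) by (auto simp: fun_eq_iff Tzf_def Taf_def field_simps power2_eq_square)
  then show ?thesis by (simp add: case_prod_beta')
qed

theorem lemma7:
  fixes a b :: nat
  assumes "3 \<le> a" and "a < b"
  defines "zt \<equiv> (real a / real b) powr (1 / (real b - real a))"
  defines "\<alpha>t \<equiv> (real b - 1) / (real b - real a) - 1 / (f zt * (real b - real a))"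
  shows "{p. critical_point a b p} = {(zt, \<alpha>t)} \<and> hessian_det a b zt \<alpha>t < 0"
proof -
  define d where "d = real b - real a"
  have d0: "d > 0" using assms(2) by (simp add: d_def)
  have dn: "real (b - a) = d" using assms(2) by (simp add: d_def of_nat_diff)
  have a0: "real a > 0" using assms(1) by simp
  have ab: "real a / real b < 1" "real a / real b > 0" using assms a0 by auto
  have zt0: "zt > 0" unfolding zt_def using ab assms by simp
  have zt1: "zt < 1"
  proof -
    have "zt < 1 powr (1 / (real b - real a))" unfolding zt_def
      by (rule powr_less_mono2) (use ab assms(2) in auto)
    then show ?thesis by simp
  qed
  have ztp: "zt ^ (b - a) = real a / real b"
  proof -
    have "zt ^ (b - a) = zt powr real (b - a)" using zt0 by (simp add: powr_realpow)
    also have "\<dots> = (real a / real b) powr (1 / d * d)" unfolding zt_def powr_powr dn d_def by simp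
    also have "\<dots> = real a / real b" using d0 ab by (simp add: powr_one)
    finally show ?thesis .
  qed
  define c where "c = real a * zt ^ (a - 1)"
  have c0: "c > 0" unfolding c_def using a0 zt0 by simp
  have bc: "real b * zt ^ (b - 1) = c"
  proof -
    have "b - 1 = (a - 1) + (b - a)" using assms by simp
    then have "zt ^ (b - 1) = zt ^ (a - 1) * zt ^ (b - a)" by (simp add: power_add)
    then show ?thesis unfolding c_def ztp using assms(2) by simp
  qed
  have Tden_zt: "Tden a b zt w = c" for w
    unfolding Tden_def using bc unfolding c_def by (simp add: algebra_simps)
  have Taf_zt: "Taf a b zt w = 0" for w
    unfolding Taf_def using bc unfolding c_def by simp
  define L where "L = - ln (1 - zt)"
  have L0: "L > 0" unfolding L_def using zt0 zt1 by simp
  have "a - 1 = Suc (a - 2)" "b - 1 = Suc (b - 2)" using assms by auto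
  then have za: "zt ^ (a - 1) = zt * zt ^ (a - 2)" and zb: "zt ^ (b - 1) = zt * zt ^ (b - 2)"
    by (metis power_Suc)+
  have e1: "real a * zt ^ (a - 2) = c / zt" using za zt0 by (simp add: c_def field_simps)
  have e2: "real b * zt ^ (b - 2) = c / zt" using zb zt0 bc by (simp add: field_simps)
  have Dz_zt: "Dz a b zt w = (c / zt) * ((real b - 1) - w * d)" for w
  proof -
    have "Dz a b zt w = w * real (a - 1) * (real a * zt ^ (a - 2)) + (1 - w) * real (b - 1) * (real b * zt ^ (b - 2))"
      unfolding Dz_def by (simp add: algebra_simps)
    also have "\<dots> = (c / zt) * ((real b - 1) - w * d)" unfolding e1 e2 d_def
      using assms(1,2) zt0 by (simp add: of_nat_diff field_simps)
    finally show ?thesis .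
  qed
  define K where "K = L * d / (zt * c)"
  have K0: "K > 0" unfolding K_def using L0 d0 zt0 c0 by simp
  have fz: "f zt = L * (1 - zt) / zt" unfolding f_def L_def by simp
  have Tzf_zt: "Tzf a b zt w = K * (w - \<alpha>t)" for w
  proof -
    have "Tzf a b zt w = ((1 / (1 - zt)) * c - L * ((c / zt) * ((real b - 1) - w * d))) / c ^ 2"
      unfolding Tzf_def Tden_zt Dz_zt L_def by simp
    also have "\<dots> = K * (w - \<alpha>t)"
      unfolding K_def \<alpha>t_def fz d_def[symmetric] using zt0 zt1 c0 L0 d0
      by (simp add: field_simps power2_eq_square)
    finally show ?thesis .
  qed
  have crit: "{p. critical_point a b p} = {(zt, \<alpha>t)}"
  proof (rule set_eqI, rule iffI)
    fix p assume "p \<in> {p. critical_point a b p}"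
    obtain z \<alpha> where p: "p = (z, \<alpha>)" by (cases p)
    with \<open>p \<in> _\<close> have z0: "0 < z" and z1: "z < 1" and Dn: "Tden a b z \<alpha> \<noteq> 0"
      and hd: "((\<lambda>(z, \<alpha>). T a b z \<alpha>) has_derivative (\<lambda>_. 0)) (at (z, \<alpha>))"
      by (auto simp: critical_point_def Tdom_def)
    have m0: "(*) (0::real) = (\<lambda>_. 0)" by auto
    have pz: "((\<lambda>w. (w, \<alpha>)) has_derivative (\<lambda>h. (h, 0))) (at z)"
      by (auto intro!: derivative_eq_intros)
    have "((\<lambda>w. T a b w \<alpha>) has_derivative (\<lambda>h. 0)) (at z)"
      using has_derivative_compose[OF pz hd] by simp
    then have "((\<lambda>w. T a b w \<alpha>) has_real_derivative 0) (at z)"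
      by (simp add: has_field_derivative_def m0)
    then have tz0: "Tzf a b z \<alpha> = 0" using DERIV_unique[OF T_z_has[OF z1 Dn]] by simp
    have pa: "((\<lambda>u. (z, u)) has_derivative (\<lambda>h. (0, h))) (at \<alpha>)"
      by (auto intro!: derivative_eq_intros)
    have "((\<lambda>u. T a b z u) has_derivative (\<lambda>h. 0)) (at \<alpha>)"
      using has_derivative_compose[OF pa hd] by simp
    then have "((\<lambda>u. T a b z u) has_real_derivative 0) (at \<alpha>)"
      by (simp add: has_field_derivative_def m0)
    then have ta0: "Taf a b z \<alpha> = 0" using DERIV_unique[OF T_a_has[OF Dn]] by simp
    have lnz: "ln (1 - z) \<noteq> 0" using z0 z1 by simp
    have Aeq: "real a * z ^ (a - 1) = real b * z ^ (b - 1)"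
      using ta0 lnz Dn unfolding Taf_def by simp
    have zp: "z ^ (b - a) = real a / real b"
    proof -
      have "b - 1 = (a - 1) + (b - a)" using assms(1,2) by simp
      then have "z ^ (b - 1) = z ^ (a - 1) * z ^ (b - a)" by (simp add: power_add)
      with Aeq have "real a * z ^ (a - 1) = real b * z ^ (a - 1) * z ^ (b - a)" by simp
      moreover have "z ^ (a - 1) > 0" using z0 by simp
      ultimately show ?thesis using assms(2) z0 by (simp add: field_simps)
    qed
    have zz: "z = zt"
    proof -
      have "zt = (z powr real (b - a)) powr (1 / d)" unfolding zt_def d_def[symmetric]
        using z0 zp by (simp add: powr_realpow)
      also have "\<dots> = z" unfolding powr_powr dn using d0 z0 by (simp add: powr_one)
      finally show ?thesis by simp
    qed
    have "K * (\<alpha> - \<alpha>t) = 0" using tz0 Tzf_zt zz by simp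
    then have "\<alpha> = \<alpha>t" using K0 by simp
    then show "p \<in> {(zt, \<alpha>t)}" using p zz by simp
  next
    fix p assume "p \<in> {(zt, \<alpha>t)}"
    then have p: "p = (zt, \<alpha>t)" by simp
    have Dn: "Tden a b zt \<alpha>t \<noteq> 0" using Tden_zt c0 by simp
    have "((\<lambda>(z, \<alpha>). T a b z \<alpha>) has_derivative (\<lambda>_. 0)) (at (zt, \<alpha>t))"
      by (rule has_derivative_eq_rhs[OF T_total[OF zt1 Dn]]) (auto simp: Tzf_zt Taf_zt fun_eq_iff)
    then show "p \<in> {p. critical_point a b p}"
      using p zt0 zt1 Dn by (simp add: critical_point_def Tdom_def)
  qed
  have Dn: "Tden a b zt w \<noteq> 0" for w using Tden_zt c0 by simp
  have Tz1: "Tz a b zt w = K * (w - \<alpha>t)" for w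
    unfolding Tz_def using DERIV_imp_deriv[OF T_z_has[OF zt1 Dn]] Tzf_zt by simp
  have Ta1: "Ta a b zt w = 0" for w
    unfolding Ta_def using DERIV_imp_deriv[OF T_a_has[OF Dn]] Taf_zt by simp
  have h1: "deriv (\<lambda>w. Ta a b zt w) \<alpha>t = 0" unfolding Ta1 by simp
  have h2: "deriv (\<lambda>w. Tz a b zt w) \<alpha>t = K" unfolding Tz1
    by (rule DERIV_imp_deriv) (auto intro!: derivative_eq_intros)
  have h3: "deriv (\<lambda>w. Ta a b w \<alpha>t) zt = K"
  proof -
    define S where "S = {w. 0 < Tden a b w \<alpha>t}"
    have "open S" unfolding S_def Tden_def
      by (rule open_Collect_less) (auto intro!: continuous_intros)
    moreover have "zt \<in> S" unfolding S_def using Tden_zt c0 by simp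
    ultimately have ev: "eventually (\<lambda>w. w \<in> S) (nhds zt)" by (rule eventually_nhds_in_open)
    have ev2: "eventually (\<lambda>w. Ta a b w \<alpha>t = Taf a b w \<alpha>t) (nhds zt)"
      using ev by eventually_elim (auto simp: S_def Ta_def intro!: DERIV_imp_deriv T_a_has)
    define A where "A = (\<lambda>w. real a * w ^ (a - 1) - real b * w ^ (b - 1))"
    define A' where "A' = real a * (real (a - 1) * zt ^ (a - 2)) - real b * (real (b - 1) * zt ^ (b - 2))"
    have dA: "(A has_real_derivative A') (at zt)" unfolding A_def A'_def
      by (rule derivative_eq_intros refl | simp add: numeral_2_eq_2)+
    have A0: "A zt = 0" unfolding A_def using bc c_def by simp
    have A'v: "A' = - (c / zt) * d"
    proof -
      have "A' = real (a - 1) * (real a * zt ^ (a - 2)) - real (b - 1) * (real b * zt ^ (b - 2))"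
        unfolding A'_def by (simp add: algebra_simps)
      also have "\<dots> = - (c / zt) * d" unfolding e1 e2 d_def
        using assms(1,2) zt0 by (simp add: of_nat_diff field_simps)
      finally show ?thesis .
    qed
    have dl: "((\<lambda>w. ln (1 - w)) has_real_derivative - 1 / (1 - zt)) (at zt)"
      using zt1 by (auto intro!: derivative_eq_intros)
    have dN: "((\<lambda>w. ln (1 - w) * A w) has_real_derivative (- 1 / (1 - zt)) * A zt + A' * ln (1 - zt)) (at zt)"
      by (rule DERIV_mult[OF dl dA])
    have dD: "((\<lambda>w. Tden a b w \<alpha>t * Tden a b w \<alpha>t) has_real_derivative
        Dz a b zt \<alpha>t * Tden a b zt \<alpha>t + Dz a b zt \<alpha>t * Tden a b zt \<alpha>t) (at zt)"
      by (rule DERIV_mult[OF Tden_has Tden_has])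
    have dT: "((\<lambda>w. ln (1 - w) * A w / (Tden a b w \<alpha>t * Tden a b w \<alpha>t)) has_real_derivative
       (((- 1 / (1 - zt)) * A zt + A' * ln (1 - zt)) * (Tden a b zt \<alpha>t * Tden a b zt \<alpha>t) -
        (ln (1 - zt) * A zt) * (Dz a b zt \<alpha>t * Tden a b zt \<alpha>t + Dz a b zt \<alpha>t * Tden a b zt \<alpha>t))
       / ((Tden a b zt \<alpha>t * Tden a b zt \<alpha>t) * (Tden a b zt \<alpha>t * Tden a b zt \<alpha>t))) (at zt)"
      by (rule DERIV_divide[OF dN dD]) (use Dn in simp)
    have fe: "(\<lambda>w. ln (1 - w) * A w / (Tden a b w \<alpha>t * Tden a b w \<alpha>t)) = (\<lambda>w. Taf a b w \<alpha>t)"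
      by (simp add: fun_eq_iff Taf_def A_def power2_eq_square)
    have val: "(((- 1 / (1 - zt)) * A zt + A' * ln (1 - zt)) * (Tden a b zt \<alpha>t * Tden a b zt \<alpha>t) -
        (ln (1 - zt) * A zt) * (Dz a b zt \<alpha>t * Tden a b zt \<alpha>t + Dz a b zt \<alpha>t * Tden a b zt \<alpha>t))
       / ((Tden a b zt \<alpha>t * Tden a b zt \<alpha>t) * (Tden a b zt \<alpha>t * Tden a b zt \<alpha>t)) = K"
      unfolding A0 A'v Tden_zt K_def using c0 zt0 by (simp add: L_def field_simps)
    have "((\<lambda>w. Taf a b w \<alpha>t) has_real_derivative K) (at zt)" using dT unfolding fe val .
    then have "((\<lambda>w. Ta a b w \<alpha>t) has_real_derivative K) (at zt)"
      using DERIV_cong_ev[OF refl ev2 refl] by simp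
    then show ?thesis by (rule DERIV_imp_deriv)
  qed
  have "hessian_det a b zt \<alpha>t = - (K * K)" unfolding hessian_det_def h1 h2 h3 by simp
  with K0 have "hessian_det a b zt \<alpha>t < 0" by simp
  with crit show ?thesis by simp
qed
end
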